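(* Let $d\geqslant1$, $\varepsilon\geqslant0$, let $P\in C^1([0,\infty);[0,\infty))\cap C^2((0,\infty);[0,\infty))$ be convex with $\kappa:=P'(0)>0$, let $\theta>0$, and let $\tau$ be the solution of $\ddot\tau=2\kappa/\tau$, $\tau(0)=1$, $\dot\tau(0)=0$. Consider a nonnegative density $R(t,y)$ and a velocity field $U(t,y)$, $t\geqslant0$, $y\in\mathbb R^d$. Suppose that the mass $\int_{\mathbb R^d}R(t,y)\,\mathrm dy$ is bounded and that the pseudo-energy $$\mathcal E(t)=\frac1{2\tau^2}\int R|U|^2+\frac{\varepsilon^2}{2\tau^2}\int|\nabla\sqrt R|^2+\kappa\int(R|y|^2+R\ln R)+\frac{\tau^d}{\theta}\int G\!\left(\frac{\theta R}{\tau^d}\right)$$ satisfies $\mathcal E(t)\leqslant\Lambda$ for all $t\geqslant0$. Then there exists $C_0>0$ such that for all $t\geqslant0$, $$\frac1{2\tau^2}\int R|U|^2+\frac{\varepsilon^2}{2\tau^2}\int|\nabla\sqrt R|^2+\kappa\int R(1+|y|^2+|\ln R|)+\tau^d\int G\!\left(\frac{\theta R}{\tau^d}\right)\leqslant C_0.$$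
   Context: All integrals are over $\mathbb R^d$ in $y$. $G(u)=\int_0^u\int_0^v\frac{P'(\sigma)-P'(0)}{\sigma}\,\mathrm d\sigma\,\mathrm dv$. *)

theory Defs
  imports "HOL-Analysis.Analysis"
begin

definition test_fun :: "('a::euclidean_space \<Rightarrow> real) \<Rightarrow> ('a \<Rightarrow> 'a) \<Rightarrow> bool" where
  "test_fun phi Dphi \<longleftrightarrow>
     (\<forall>y. (phi has_derivative (\<lambda>h. Dphi y \<bullet> h)) (at y)) \<and>
     continuous_on UNIV Dphi \<and> bounded {y. phi y \<noteq> 0}"

definition weak_gradient :: "('a::euclidean_space \<Rightarrow> real) \<Rightarrow> ('a \<Rightarrow> 'a) \<Rightarrow> bool" where
  "weak_gradient f g \<longleftrightarrow>
     (\<forall>phi Dphi. test_fun phi Dphi \<longrightarrow>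
        (\<integral>y. f y *\<^sub>R Dphi y \<partial>lborel) = - (\<integral>y. phi y *\<^sub>R g y \<partial>lborel))"

text \<open>G(u) = int_0^u int_0^v (P'(s) - P'(0))/s ds dv, with dP = P'. The integrand is
  nonnegative for convex P, so G is taken as a nonnegative extended real (possibly infinite).\<close>
definition Gfun :: "(real \<Rightarrow> real) \<Rightarrow> real \<Rightarrow> ennreal" where
  "Gfun dP u = (\<integral>\<^sup>+ v. indicator {0..u} v *
      (\<integral>\<^sup>+ s. indicator {0..v} s * ennreal ((dP s - dP 0) / s) \<partial>lborel) \<partial>lborel)"

end

theory Submission
  imports Defs "HOL-Probability.Probability"
begin


lemma gauss1: "(\<integral>\<^sup>+x. ennreal (exp (- (x::real)\<^sup>2 / 2)) \<partial>lborel) < \<infinity>"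
proof -
  have A: "integrable lborel (\<lambda>x. sqrt (2*pi) * (std_normal_density x * x^0))"
    using integrable_std_normal_moment[of 0] by (rule integrable_mult_right)
  have B: "(\<lambda>x. sqrt (2*pi) * (std_normal_density x * x^0)) = (\<lambda>x. exp (- x\<^sup>2 / 2))"
    by (auto simp: std_normal_density_def fun_eq_iff)
  have "integrable lborel (\<lambda>x::real. exp (- x\<^sup>2 / 2))" by (subst B[symmetric]) (rule A)
  then show ?thesis by (simp add: integrable_iff_bounded)
qed

lemma gaussd: "integrable lborel (\<lambda>y::'a::euclidean_space. exp (- (norm y)\<^sup>2 / 2))"
proof (rule integrableI_bounded)
  show "(\<lambda>y::'a. exp (- (norm y)\<^sup>2 / 2)) \<in> borel_measurable lborel" by measurable
  have eq: "ennreal (norm (exp (- (norm y)\<^sup>2 / 2))) = (\<Prod>b\<in>Basis. ennreal (exp (- (y \<bullet> b)\<^sup>2 / 2)))" for y :: 'a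
  proof -
    have "(norm y)\<^sup>2 = y \<bullet> y" by (rule power2_norm_eq_inner)
    also have "\<dots> = (\<Sum>b\<in>Basis. (y \<bullet> b) * (y \<bullet> b))" by (rule euclidean_inner)
    also have "\<dots> = (\<Sum>b\<in>Basis. (y \<bullet> b)\<^sup>2)" by (simp only: power2_eq_square)
    finally have "(norm y)\<^sup>2 = (\<Sum>b\<in>Basis. (y \<bullet> b)\<^sup>2)" .
    then have "- (norm y)\<^sup>2 / 2 = (\<Sum>b\<in>Basis. - (y \<bullet> b)\<^sup>2 / 2)"
      by (simp add: sum_negf sum_divide_distrib)
    then have "exp (- (norm y)\<^sup>2 / 2) = (\<Prod>b\<in>Basis. exp (- (y \<bullet> b)\<^sup>2 / 2))"
      by (simp only: exp_sum[OF finite_Basis])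
    then show ?thesis by (simp add: prod_ennreal prod_nonneg)
  qed
  have "(\<integral>\<^sup>+y. ennreal (norm (exp (- (norm y)\<^sup>2 / 2))) \<partial>(lborel::'a measure))
      = (\<Prod>b\<in>(Basis::'a set). (\<integral>\<^sup>+x. ennreal (exp (- x\<^sup>2 / 2)) \<partial>lborel))"
    unfolding eq by (rule nn_integral_lborel_prod) auto
  also have "\<dots> < \<infinity>" using gauss1 by (simp add: less_top[symmetric] ennreal_prod_eq_top power_eq_top_ennreal)
  finally show "(\<integral>\<^sup>+y. ennreal (norm (exp (- (norm y)\<^sup>2 / 2))) \<partial>(lborel::'a measure)) < \<infinity>" .
qed



lemma tau_pos:
  fixes \<tau> \<tau>' :: "real \<Rightarrow> real" and \<kappa> :: real
  assumes k: "\<kappa> > 0" and t0: "\<tau> 0 = 1" "\<tau>' 0 = 0"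
    and d1: "\<forall>t\<ge>0. (\<tau> has_real_derivative \<tau>' t) (at t within {0..})"
    and d2: "\<forall>t\<ge>0. (\<tau>' has_real_derivative 2 * \<kappa> / \<tau> t) (at t within {0..})"
  shows "\<forall>t\<ge>0. \<tau> t > 1/2"
proof (rule ccontr)
  assume "\<not> ?thesis"
  then obtain t1 where t1: "t1 \<ge> 0" "\<tau> t1 \<le> 1/2" by (auto simp: not_less)
  have cont: "continuous_on {0..} \<tau>"
    by (rule DERIV_continuous_on) (use d1 in auto)
  have cont': "continuous_on {0..} \<tau>'"
    by (rule DERIV_continuous_on) (use d2 in auto)
  have at_eq: "at x within {0..} = at x" if "x > 0" for x :: real
    by (rule at_within_interior) (use that in simp)
  define S where "S = {0..t1} \<inter> \<tau> -` {..1/2}"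
  have cS: "closed S" unfolding S_def
    by (rule continuous_closed_preimage) (auto intro: continuous_on_subset[OF cont])
  have neS: "S \<noteq> {}" using t1 by (auto simp: S_def)
  have bS: "bdd_below S" by (auto simp: S_def bdd_below_def)
  define c where "c = Inf S"
  have cin: "c \<in> S" unfolding c_def by (rule closed_contains_Inf[OF neS bS cS])
  then have c0: "c \<ge> 0" "\<tau> c \<le> 1/2" by (auto simp: S_def)
  have cpos: "c > 0" using c0 t0 by (cases "c = 0") auto
  have below: "\<tau> u > 1/2" if "0 \<le> u" "u < c" for u
  proof (rule ccontr)
    assume "\<not> \<tau> u > 1/2"
    then have "u \<in> S" using that cin by (auto simp: S_def)
    then have "c \<le> u" unfolding c_def using bS by (rule cInf_lower)
    then show False using that by simp
  qed
  have d'nonneg: "\<tau>' u \<ge> 0" if "0 \<le> u" "u < c" for u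
  proof -
    have "\<tau>' 0 \<le> \<tau>' u"
    proof (rule DERIV_nonneg_imp_increasing_open[OF that(1)])
      fix x :: real assume x: "0 < x" "x < u"
      have "(\<tau>' has_real_derivative 2 * \<kappa> / \<tau> x) (at x)"
        using d2 x at_eq[of x] by (metis less_imp_le)
      moreover have "2 * \<kappa> / \<tau> x \<ge> 0" using below[of x] x that k by auto
      ultimately show "\<exists>y. DERIV \<tau>' x :> y \<and> y \<ge> 0" by blast
    next
      show "continuous_on {0..u} \<tau>'" by (rule continuous_on_subset[OF cont']) auto
    qed
    then show ?thesis using t0 by simp
  qed
  have "\<tau> 0 \<le> \<tau> c"
  proof (rule DERIV_nonneg_imp_increasing_open[OF c0(1)])
    fix x :: real assume x: "0 < x" "x < c"
    have "(\<tau> has_real_derivative \<tau>' x) (at x)"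
      using d1 x at_eq[of x] by (metis less_imp_le)
    then show "\<exists>y. DERIV \<tau> x :> y \<and> y \<ge> 0" using d'nonneg[of x] x by auto
  next
    show "continuous_on {0..c} \<tau>" by (rule continuous_on_subset[OF cont]) auto
  qed
  then show False using t0 c0 by simp
qed

lemma ptwise:
  fixes r s :: real
  assumes "r \<ge> 0" "s \<ge> 0"
  shows "- (r * ln r) \<le> r * s / 2 + exp (- s / 2)"
proof (cases "r = 0")
  case True then show ?thesis by simp
next
  case False
  then have r: "r > 0" using assms by simp
  have "ln (exp (- s / 2) / r) \<le> exp (- s / 2) / r - 1"
    by (rule ln_le_minus_one) (use r in simp)
  also have "ln (exp (- s / 2) / r) = - s / 2 - ln r"
    using r by (simp add: ln_div)
  finally have "- s / 2 - ln r \<le> exp (- s / 2) / r" by simp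
  then have "r * (- s / 2 - ln r) \<le> r * (exp (- s / 2) / r)"
    using r by (intro mult_left_mono) auto
  then show ?thesis using r by (simp add: algebra_simps)
qed


lemma arith_bound:
  fixes A B Gs \<theta> \<kappa> \<Gamma> J K L m M \<Lambda> :: real
  assumes "A \<ge> 0" "B \<ge> 0" "Gs \<ge> 0" "\<theta> > 0" "\<kappa> > 0" "\<Gamma> \<ge> 0" "J \<ge> 0" "m \<le> M"
    "L \<le> K + J + 2 * \<Gamma>" "K \<ge> - J / 2 - \<Gamma>" "A + B + \<kappa> * (J + K) + Gs \<le> \<Lambda>"
  shows "A + B + \<kappa> * (m + J + L) + \<theta> * Gs \<le> (1 + \<theta>) * (\<bar>\<Lambda>\<bar> + \<kappa> * \<Gamma>) + \<kappa> * \<bar>M\<bar> + 3 * \<bar>\<Lambda>\<bar> + 4 * \<kappa> * \<Gamma> + 1"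
proof -
  define X where "X = J + K"
  have X1: "X \<ge> - \<Gamma>" using assms X_def by linarith
  have X2: "J \<le> 2 * X + 2 * \<Gamma>" using assms X_def by linarith
  have kX: "\<kappa> * X \<ge> - (\<kappa> * \<Gamma>)" using mult_left_mono[OF X1, of \<kappa>] assms by simp
  have en: "A + B + \<kappa> * X + Gs \<le> \<Lambda>" using assms(11) unfolding X_def .
  have E0: "A + B + Gs \<le> \<Lambda> + \<kappa> * \<Gamma>" using kX en assms by linarith
  have kX2: "\<kappa> * X \<le> \<Lambda>" using en assms by linarith
  have "m + J + L \<le> M + X + J + 2 * \<Gamma>" using assms X_def by linarith
  also have "\<dots> \<le> \<bar>M\<bar> + 3 * X + 4 * \<Gamma>" using X2 by linarith
  finally have "\<kappa> * (m + J + L) \<le> \<kappa> * (\<bar>M\<bar> + 3 * X + 4 * \<Gamma>)"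
    using assms by (intro mult_left_mono) auto
  also have "\<dots> = \<kappa> * \<bar>M\<bar> + 3 * (\<kappa> * X) + 4 * \<kappa> * \<Gamma>" by (simp add: algebra_simps)
  finally have k: "\<kappa> * (m + J + L) \<le> \<kappa> * \<bar>M\<bar> + 3 * \<bar>\<Lambda>\<bar> + 4 * \<kappa> * \<Gamma>" using kX2 by linarith
  have "Gs \<le> \<bar>\<Lambda>\<bar> + \<kappa> * \<Gamma>" using E0 assms by linarith
  then have t: "\<theta> * Gs \<le> \<theta> * (\<bar>\<Lambda>\<bar> + \<kappa> * \<Gamma>)" using assms by (intro mult_left_mono) auto
  have "A + B \<le> \<bar>\<Lambda>\<bar> + \<kappa> * \<Gamma>" using E0 assms by linarith
  then show ?thesis using k t by (simp add: algebra_simps)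
qed
theorem lemma3p3:
  fixes P dP d2P :: "real \<Rightarrow> real"
    and \<kappa> \<epsilon> \<theta> \<Lambda> :: real
    and \<tau> \<tau>' :: "real \<Rightarrow> real"
    and R :: "real \<Rightarrow> 'a::euclidean_space \<Rightarrow> real"
    and U :: "real \<Rightarrow> 'a \<Rightarrow> 'a"
    and gR :: "real \<Rightarrow> 'a \<Rightarrow> 'a"
  assumes eps: "\<epsilon> \<ge> 0" and theta: "\<theta> > 0"
    and P_C1: "\<forall>x\<ge>0. (P has_real_derivative dP x) (at x within {0..})" "continuous_on {0..} dP"
    and P_C2: "\<forall>x>0. (dP has_real_derivative d2P x) (at x)" "continuous_on {0<..} d2P"
    and P_nonneg: "\<forall>x\<ge>0. P x \<ge> 0"
    and P_convex: "convex_on {0..} P"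
    and kappa: "\<kappa> = dP 0" "\<kappa> > 0"
    and tau: "\<tau> 0 = 1" "\<tau>' 0 = 0"
      "\<forall>t\<ge>0. (\<tau> has_real_derivative \<tau>' t) (at t within {0..})"
      "\<forall>t\<ge>0. (\<tau>' has_real_derivative 2 * \<kappa> / \<tau> t) (at t within {0..})"
    and R_nonneg: "\<forall>t\<ge>0. \<forall>y. R t y \<ge> 0"
    and R_int: "\<forall>t\<ge>0. integrable lborel (R t)"
    and RU_int: "\<forall>t\<ge>0. integrable lborel (\<lambda>y. R t y * (norm (U t y))\<^sup>2)"
    and grad: "\<forall>t\<ge>0. weak_gradient (\<lambda>y. sqrt (R t y)) (gR t)"
    and grad_int: "\<forall>t\<ge>0. integrable lborel (\<lambda>y. (norm (gR t y))\<^sup>2)"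
    and Ry_int: "\<forall>t\<ge>0. integrable lborel (\<lambda>y. R t y * (norm y)\<^sup>2)"
    and RlnR_int: "\<forall>t\<ge>0. integrable lborel (\<lambda>y. R t y * ln (R t y))"
    and G_fin: "\<forall>t\<ge>0. (\<integral>\<^sup>+ y. Gfun dP (\<theta> * R t y / \<tau> t ^ DIM('a)) \<partial>lborel) < \<infinity>"
    and mass: "\<exists>M. \<forall>t\<ge>0. (\<integral>y. R t y \<partial>lborel) \<le> M"
    and energy: "\<forall>t\<ge>0.
        1 / (2 * (\<tau> t)\<^sup>2) * (\<integral>y. R t y * (norm (U t y))\<^sup>2 \<partial>lborel)
      + \<epsilon>\<^sup>2 / (2 * (\<tau> t)\<^sup>2) * (\<integral>y. (norm (gR t y))\<^sup>2 \<partial>lborel)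
      + \<kappa> * ((\<integral>y. R t y * (norm y)\<^sup>2 \<partial>lborel) + (\<integral>y. R t y * ln (R t y) \<partial>lborel))
      + (\<tau> t) ^ DIM('a) / \<theta> *
          enn2real (\<integral>\<^sup>+ y. Gfun dP (\<theta> * R t y / \<tau> t ^ DIM('a)) \<partial>lborel)
      \<le> \<Lambda>"
  shows "\<exists>C0>0. \<forall>t\<ge>0.
        1 / (2 * (\<tau> t)\<^sup>2) * (\<integral>y. R t y * (norm (U t y))\<^sup>2 \<partial>lborel)
      + \<epsilon>\<^sup>2 / (2 * (\<tau> t)\<^sup>2) * (\<integral>y. (norm (gR t y))\<^sup>2 \<partial>lborel)
      + \<kappa> * (\<integral>y. R t y * (1 + (norm y)\<^sup>2 + \<bar>ln (R t y)\<bar>) \<partial>lborel)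
      + (\<tau> t) ^ DIM('a) *
          enn2real (\<integral>\<^sup>+ y. Gfun dP (\<theta> * R t y / \<tau> t ^ DIM('a)) \<partial>lborel)
      \<le> C0"
  proof -
  obtain M where M: "\<forall>t\<ge>0. (\<integral>y. R t y \<partial>lborel) \<le> M" using mass by blast
  define g :: "'a \<Rightarrow> real" where "g = (\<lambda>y. exp (- (norm y)\<^sup>2 / 2))"
  have gint: "integrable lborel g" unfolding g_def by (rule gaussd)
  have g0: "g y \<ge> 0" for y unfolding g_def by simp
  define \<Gamma> where "\<Gamma> = (\<integral>y. g y \<partial>lborel)"
  have \<Gamma>0: "\<Gamma> \<ge> 0" unfolding \<Gamma>_def by (rule Bochner_Integration.integral_nonneg) (simp add: g0)
  have \<tau>pos: "\<forall>t\<ge>0. \<tau> t > 1/2" by (rule tau_pos[OF kappa(2) tau])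
  define C where "C = (1 + \<theta>) * (\<bar>\<Lambda>\<bar> + \<kappa> * \<Gamma>) + \<kappa> * \<bar>M\<bar> + 3 * \<bar>\<Lambda>\<bar> + 4 * \<kappa> * \<Gamma> + 1"
  show ?thesis
  proof (intro exI[of _ C] conjI allI impI)
    have "(1 + \<theta>) * (\<bar>\<Lambda>\<bar> + \<kappa> * \<Gamma>) \<ge> 0" using theta kappa \<Gamma>0 by (intro mult_nonneg_nonneg) auto
    moreover have "\<kappa> * \<bar>M\<bar> \<ge> 0" using kappa by simp
    moreover have "\<kappa> * \<Gamma> \<ge> 0" using kappa \<Gamma>0 by simp
    ultimately show "C > 0" unfolding C_def by linarith
  next
    fix t :: real assume t: "t \<ge> 0"
    have Rt: "R t y \<ge> 0" for y using R_nonneg t by auto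
    have iR: "integrable lborel (R t)" using R_int t by auto
    have iJ: "integrable lborel (\<lambda>y. R t y * (norm y)\<^sup>2)" using Ry_int t by auto
    have iK: "integrable lborel (\<lambda>y. R t y * ln (R t y))" using RlnR_int t by auto
    have "(\<lambda>y. R t y * \<bar>ln (R t y)\<bar>) = (\<lambda>y. \<bar>R t y * ln (R t y)\<bar>)"
      using Rt by (auto simp: abs_mult fun_eq_iff)
    then have iL: "integrable lborel (\<lambda>y. R t y * \<bar>ln (R t y)\<bar>)"
      using Bochner_Integration.integrable_abs[OF iK] by simp
    have "(\<lambda>y. R t y * (1 + (norm y)\<^sup>2 + \<bar>ln (R t y)\<bar>))
        = (\<lambda>y. (R t y + R t y * (norm y)\<^sup>2) + R t y * \<bar>ln (R t y)\<bar>)"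
      by (simp add: fun_eq_iff algebra_simps)
    then have I_eq: "(\<integral>y. R t y * (1 + (norm y)\<^sup>2 + \<bar>ln (R t y)\<bar>) \<partial>lborel)
        = (\<integral>y. R t y \<partial>lborel) + (\<integral>y. R t y * (norm y)\<^sup>2 \<partial>lborel)
          + (\<integral>y. R t y * \<bar>ln (R t y)\<bar> \<partial>lborel)"
      by (simp add: Bochner_Integration.integral_add[OF Bochner_Integration.integrable_add[OF iR iJ] iL] Bochner_Integration.integral_add[OF iR iJ])
    have pw: "R t y * \<bar>ln (R t y)\<bar> \<le> R t y * ln (R t y) + R t y * (norm y)\<^sup>2 + 2 * g y" for y
    proof -
      have p: "- (R t y * ln (R t y)) \<le> R t y * (norm y)\<^sup>2 / 2 + g y"
        unfolding g_def by (rule ptwise) (auto simp: Rt)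
      have q: "R t y * (norm y)\<^sup>2 \<ge> 0" using Rt by simp
      have "R t y * \<bar>ln (R t y)\<bar> = \<bar>R t y * ln (R t y)\<bar>" using Rt by (simp add: abs_mult)
      also have "\<dots> \<le> R t y * ln (R t y) + R t y * (norm y)\<^sup>2 + 2 * g y"
        using p q g0[of y] by (intro abs_leI) linarith+
      finally show ?thesis .
    qed
    have i3: "integrable lborel (\<lambda>y. R t y * ln (R t y) + R t y * (norm y)\<^sup>2 + 2 * g y)"
      by (intro Bochner_Integration.integrable_add iK iJ Bochner_Integration.integrable_mult_right gint)
    have "(\<integral>y. R t y * \<bar>ln (R t y)\<bar> \<partial>lborel)
        \<le> (\<integral>y. R t y * ln (R t y) + R t y * (norm y)\<^sup>2 + 2 * g y \<partial>lborel)"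
      by (rule Bochner_Integration.integral_mono[OF iL i3]) (rule pw)
    also have "\<dots> = (\<integral>y. R t y * ln (R t y) \<partial>lborel) + (\<integral>y. R t y * (norm y)\<^sup>2 \<partial>lborel) + 2 * \<Gamma>"
      unfolding \<Gamma>_def
      by (simp add: Bochner_Integration.integral_add[OF Bochner_Integration.integrable_add[OF iK iJ] Bochner_Integration.integrable_mult_right[OF gint]]
          Bochner_Integration.integral_add[OF iK iJ] Bochner_Integration.integral_mult_right_zero)
    finally have L_le: "(\<integral>y. R t y * \<bar>ln (R t y)\<bar> \<partial>lborel)
        \<le> (\<integral>y. R t y * ln (R t y) \<partial>lborel) + (\<integral>y. R t y * (norm y)\<^sup>2 \<partial>lborel) + 2 * \<Gamma>" .
    have i4: "integrable lborel (\<lambda>y. (-1/2) * (R t y * (norm y)\<^sup>2) - g y)"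
      by (intro Bochner_Integration.integrable_diff Bochner_Integration.integrable_mult_right iJ gint)
    have "(\<integral>y. (-1/2) * (R t y * (norm y)\<^sup>2) - g y \<partial>lborel) \<le> (\<integral>y. R t y * ln (R t y) \<partial>lborel)"
    proof (rule Bochner_Integration.integral_mono[OF i4 iK])
      fix y
      have "- (R t y * ln (R t y)) \<le> R t y * (norm y)\<^sup>2 / 2 + g y"
        unfolding g_def by (rule ptwise) (auto simp: Rt)
      then show "(-1/2) * (R t y * (norm y)\<^sup>2) - g y \<le> R t y * ln (R t y)" by simp
    qed
    also have "(\<integral>y. (-1/2) * (R t y * (norm y)\<^sup>2) - g y \<partial>lborel)
        = - (\<integral>y. R t y * (norm y)\<^sup>2 \<partial>lborel) / 2 - \<Gamma>"
      unfolding \<Gamma>_def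
      by (subst Bochner_Integration.integral_diff[OF Bochner_Integration.integrable_mult_right[OF iJ] gint])
        (subst Bochner_Integration.integral_mult_right_zero, simp)
    finally have K_ge: "- (\<integral>y. R t y * (norm y)\<^sup>2 \<partial>lborel) / 2 - \<Gamma> \<le> (\<integral>y. R t y * ln (R t y) \<partial>lborel)" .
    have A0: "1 / (2 * (\<tau> t)\<^sup>2) * (\<integral>y. R t y * (norm (U t y))\<^sup>2 \<partial>lborel) \<ge> 0"
      by (intro mult_nonneg_nonneg Bochner_Integration.integral_nonneg) (auto simp: Rt)
    have B0: "\<epsilon>\<^sup>2 / (2 * (\<tau> t)\<^sup>2) * (\<integral>y. (norm (gR t y))\<^sup>2 \<partial>lborel) \<ge> 0"
      by (intro mult_nonneg_nonneg Bochner_Integration.integral_nonneg) auto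
    have T0: "\<tau> t ^ DIM('a) > 0" using \<tau>pos t by auto
    have G0: "(\<tau> t) ^ DIM('a) / \<theta> *
          enn2real (\<integral>\<^sup>+ y. Gfun dP (\<theta> * R t y / \<tau> t ^ DIM('a)) \<partial>lborel) \<ge> 0"
      using T0 theta by (intro mult_nonneg_nonneg) auto
    have J0: "(\<integral>y. R t y * (norm y)\<^sup>2 \<partial>lborel) \<ge> 0"
      by (intro Bochner_Integration.integral_nonneg) (auto simp: Rt)
    have TG: "(\<tau> t) ^ DIM('a) * enn2real (\<integral>\<^sup>+ y. Gfun dP (\<theta> * R t y / \<tau> t ^ DIM('a)) \<partial>lborel)
       = \<theta> * ((\<tau> t) ^ DIM('a) / \<theta> * enn2real (\<integral>\<^sup>+ y. Gfun dP (\<theta> * R t y / \<tau> t ^ DIM('a)) \<partial>lborel))"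
      using theta by simp
    show "1 / (2 * (\<tau> t)\<^sup>2) * (\<integral>y. R t y * (norm (U t y))\<^sup>2 \<partial>lborel)
      + \<epsilon>\<^sup>2 / (2 * (\<tau> t)\<^sup>2) * (\<integral>y. (norm (gR t y))\<^sup>2 \<partial>lborel)
      + \<kappa> * (\<integral>y. R t y * (1 + (norm y)\<^sup>2 + \<bar>ln (R t y)\<bar>) \<partial>lborel)
      + (\<tau> t) ^ DIM('a) *
          enn2real (\<integral>\<^sup>+ y. Gfun dP (\<theta> * R t y / \<tau> t ^ DIM('a)) \<partial>lborel)
      \<le> C"
      unfolding I_eq TG C_def
      by (rule arith_bound[OF A0 B0 G0 theta kappa(2) \<Gamma>0 J0 M[rule_format, OF t] L_le K_ge])
        (use energy t in auto)
  qed
qed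

end
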